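(* For all nonnegative integers $i_1,\dots,i_n$ and $j_1,\dots,j_n$, $$\big|e_{i_1,\dots,i_n}-e_{j_1,\dots,j_n}\big|\le 6\sqrt{\sum_{\ell=1}^n|i_\ell-j_\ell|}.$$
   Context: Let $(U_{\ell,r})_{\ell,r\ge1}$ be i.i.d. uniform random variables on $[0,1]$. For nonnegative integers $i_1,\dots,i_n$ let $\mathcal S_{i_1,\dots,i_n}=\bigcup_{\ell=1}^n\bigcup_{r=1}^{i_\ell}\{(U_{\ell,r},\ell)\}$ ($i_\ell$ uniform points on the horizontal line at height $\ell$), and $e_{i_1,\dots,i_n}=\mathbb E[\mathcal L_<(\mathcal S_{i_1,\dots,i_n})]$, where for a finite point set $\mathcal P$, $\mathcal L_<(\mathcal P)$ is the maximal length of a chain $P_1\prec\dots\prec P_L$ in $\mathcal P$, with $(a,b)\prec(a',b')$ iff $a<a'$ and $b<b'$. *)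

theory Defs
  imports "HOL-Probability.Probability"
begin

definition prec :: "real \<times> real \<Rightarrow> real \<times> real \<Rightarrow> bool" where
  "prec p q \<longleftrightarrow> fst p < fst q \<and> snd p < snd q"

definition Lchain :: "(real \<times> real) set \<Rightarrow> nat" where
  "Lchain P = Max {length xs | xs. set xs \<subseteq> P \<and> sorted_wrt prec xs}"

text \<open>Underlying probability space: i.i.d. uniform variables U_(l,r) on [0,1], l,r >= 1
  (the coordinate maps of the infinite product measure).\<close>
definition Umeasure :: "(nat \<times> nat \<Rightarrow> real) measure" where
  "Umeasure = PiM UNIV (\<lambda>_. uniform_measure lborel {0..1::real})"

definition Sset :: "nat \<Rightarrow> (nat \<Rightarrow> nat) \<Rightarrow> (nat \<times> nat \<Rightarrow> real) \<Rightarrow> (real \<times> real) set" where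
  "Sset n i \<omega> = {(\<omega> (l, r), real l) | l r. 1 \<le> l \<and> l \<le> n \<and> 1 \<le> r \<and> r \<le> i l}"

definition eval :: "nat \<Rightarrow> (nat \<Rightarrow> nat) \<Rightarrow> real" where
  "eval n i = (\<integral>\<omega>. real (Lchain (Sset n i \<omega>)) \<partial>Umeasure)"

end

theory Submission
  imports Defs "HOL-Combinatorics.Multiset_Permutations"
begin


definition okc :: "(nat\<times>nat \<Rightarrow> real) \<Rightarrow> (nat\<times>nat) list \<Rightarrow> bool" where
  "okc \<omega> ps = sorted_wrt (\<lambda>p q. fst p < fst q \<and> \<omega> p < \<omega> q) ps"

definition LS :: "(nat\<times>nat) set \<Rightarrow> (nat\<times>nat \<Rightarrow> real) \<Rightarrow> nat" where
  "LS A \<omega> = Max ((\<lambda>ps. if okc \<omega> ps then length ps else 0) ` {ps. set ps \<subseteq> A \<and> distinct ps})"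

definition Iset :: "nat \<Rightarrow> (nat \<Rightarrow> nat) \<Rightarrow> (nat\<times>nat) set" where
  "Iset n i = (SIGMA l:{1..n}. {1..i l})"

lemma okc_distinct: "okc \<omega> ps \<Longrightarrow> distinct ps"
proof -
  assume "okc \<omega> ps"
  then have "sorted_wrt (\<lambda>p q. fst p < fst q) ps"
    unfolding okc_def by (rule sorted_wrt_mono_rel[rotated]) auto
  then have "sorted_wrt (<) (map fst ps)" by (simp add: sorted_wrt_map)
  then show ?thesis by (simp add: strict_sorted_iff distinct_map)
qed

lemma LS_ge: "finite A \<Longrightarrow> set ps \<subseteq> A \<Longrightarrow> okc \<omega> ps \<Longrightarrow> length ps \<le> LS A \<omega>"
proof -
  assume a: "finite A" "set ps \<subseteq> A" "okc \<omega> ps"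
  have "(if okc \<omega> ps then length ps else 0) \<le> LS A \<omega>"
    unfolding LS_def
    by (rule Max_ge) (use a finite_subset_distinct[OF a(1)] okc_distinct[OF a(3)] in auto)
  then show ?thesis using a by simp
qed

lemma LS_ex: assumes "finite A" shows "\<exists>ps. set ps \<subseteq> A \<and> okc \<omega> ps \<and> LS A \<omega> = length ps"
proof -
  have fin: "finite {ps. set ps \<subseteq> A \<and> distinct ps}" using finite_subset_distinct[OF assms] .
  have ne: "{ps. set ps \<subseteq> A \<and> distinct ps} \<noteq> {}" by (auto intro!: exI[of _ "[]"])
  have "LS A \<omega> \<in> (\<lambda>ps. if okc \<omega> ps then length ps else 0) ` {ps. set ps \<subseteq> A \<and> distinct ps}"
    unfolding LS_def by (rule Max_in) (use fin ne in auto)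
  then obtain ps where ps: "set ps \<subseteq> A" "distinct ps"
     "LS A \<omega> = (if okc \<omega> ps then length ps else 0)" by auto
  show ?thesis
  proof (cases "okc \<omega> ps")
    case True then show ?thesis using ps by auto
  next
    case False then show ?thesis using ps by (intro exI[of _ "[]"]) (auto simp: okc_def)
  qed
qed

lemma LS_mono: "finite B \<Longrightarrow> A \<subseteq> B \<Longrightarrow> LS A \<omega> \<le> LS B \<omega>"
proof -
  assume a: "finite B" "A \<subseteq> B"
  then have "finite A" by (rule finite_subset[rotated])
  then obtain ps where "set ps \<subseteq> A" "okc \<omega> ps" "LS A \<omega> = length ps" using LS_ex by blast
  then show ?thesis using LS_ge[OF a(1), of ps] a by auto
qed

lemma LS_union: assumes "finite A" "finite B" shows "LS (A \<union> B) \<omega> \<le> LS A \<omega> + LS B \<omega>"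
proof -
  obtain ps where ps: "set ps \<subseteq> A \<union> B" "okc \<omega> ps" "LS (A \<union> B) \<omega> = length ps"
    using LS_ex assms by blast
  have 1: "length (filter (\<lambda>p. p \<in> A) ps) \<le> LS A \<omega>"
    using ps by (intro LS_ge assms) (auto simp: okc_def sorted_wrt_filter)
  have 2: "length (filter (\<lambda>p. \<not> p \<in> A) ps) \<le> LS B \<omega>"
    using ps by (intro LS_ge assms) (auto simp: okc_def sorted_wrt_filter)
  show ?thesis using 1 2 ps(3) sum_length_filter_compl[of "\<lambda>p. p \<in> A" ps] by linarith
qed



lemma prob_U: "prob_space Umeasure"
  unfolding Umeasure_def by (intro prob_space_PiM prob_space_uniform_measure) auto

lemma space_U[simp]: "space Umeasure = UNIV"
  unfolding Umeasure_def by (auto simp: space_PiM)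

lemma comp_meas[measurable]: "(\<lambda>\<omega>. \<omega> x) \<in> borel_measurable Umeasure"
proof -
  have "(\<lambda>\<omega>. \<omega> x) \<in> measurable Umeasure (uniform_measure lborel {0..1::real})"
    unfolding Umeasure_def by (rule measurable_component_singleton) auto
  moreover have "measurable Umeasure (uniform_measure lborel {0..1::real}) = measurable Umeasure borel"
    by (rule measurable_cong_sets) auto
  ultimately show ?thesis by simp
qed

lemma meas_sorted: "Measurable.pred Umeasure (\<lambda>\<omega>. sorted_wrt (\<lambda>p q. P p q \<and> \<omega> p < (\<omega> q :: real)) ps)"
proof (induction ps)
  case Nil then show ?case by simp
next
  case (Cons x xs)
  show ?case unfolding sorted_wrt.simps using Cons by measurable
qed

definition Aev :: "(nat\<times>nat) list \<Rightarrow> (nat\<times>nat \<Rightarrow> real) set" where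
  "Aev ps = {\<omega>. sorted_wrt (\<lambda>p q. \<omega> p < \<omega> q) ps}"

lemma Aev_sets: "Aev ps \<in> sets Umeasure"
  using meas_sorted[of "\<lambda>_ _. True" ps] unfolding Aev_def pred_def by simp

lemma reindex_U: assumes "inj f" "S \<in> sets Umeasure"
  shows "measure Umeasure {\<omega>. (\<lambda>x. \<omega> (f x)) \<in> S} = measure Umeasure S"
proof -
  have d: "distr Umeasure Umeasure (\<lambda>\<omega>. \<lambda>n\<in>UNIV. \<omega> (f n)) = Umeasure"
  proof -
    have pu: "prob_space (uniform_measure lborel {0..1::real})" by (intro prob_space_uniform_measure) auto
    show ?thesis unfolding Umeasure_def
      using distr_PiM_reindex[of UNIV "\<lambda>_. uniform_measure lborel {0..1::real}" f UNIV] assms(1) pu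
      by simp
  qed
  have m: "(\<lambda>\<omega>. \<lambda>n\<in>UNIV. \<omega> (f n)) \<in> measurable Umeasure Umeasure"
    unfolding Umeasure_def by measurable
  have "measure Umeasure S = measure (distr Umeasure Umeasure (\<lambda>\<omega>. \<lambda>n\<in>UNIV. \<omega> (f n))) S"
    using d by simp
  also have "\<dots> = measure Umeasure ((\<lambda>\<omega>. \<lambda>n\<in>UNIV. \<omega> (f n)) -` S \<inter> space Umeasure)"
    by (rule measure_distr[OF m assms(2)])
  also have "(\<lambda>\<omega>. \<lambda>n\<in>UNIV. \<omega> (f n)) -` S \<inter> space Umeasure = {\<omega>. (\<lambda>x. \<omega> (f x)) \<in> S}"
    by (auto simp: restrict_def)
  finally show ?thesis by simp
qed

lemma sorted_key_unique:
  fixes g :: "'a \<Rightarrow> 'b::linorder"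
  assumes "sorted_wrt (\<lambda>p q. g p < g q) xs" "sorted_wrt (\<lambda>p q. g p < g q) ys" "set xs = set ys"
  shows "xs = ys"
proof -
  have "sorted_wrt (<) (map g xs)" "sorted_wrt (<) (map g ys)"
    using assms by (simp_all add: sorted_wrt_map)
  then have a: "sorted (map g xs)" "distinct (map g xs)" "sorted (map g ys)" "distinct (map g ys)"
    unfolding strict_sorted_iff by auto
  have "map g xs = map g ys"
    using a assms(3) by (intro sorted_distinct_set_unique) auto
  moreover have "inj_on g (set xs \<union> set ys)" using a assms(3) by (simp add: distinct_map)
  ultimately show ?thesis using inj_on_map_eq_map by blast
qed

lemma prob_A_perm:
  assumes dp: "distinct ps" and qs: "qs \<in> permutations_of_set (set ps)"
  shows "measure Umeasure (Aev qs) = measure Umeasure (Aev ps)"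
proof -
  have sq: "set qs = set ps" "distinct qs" using qs by (auto simp: permutations_of_set_def)
  have lq: "length qs = length ps" using sq dp by (metis distinct_card)
  define f where "f = (\<lambda>x. case map_of (zip ps qs) x of None \<Rightarrow> x | Some y \<Rightarrow> y)"
  have fn: "f (ps ! m) = qs ! m" if "m < length ps" for m
    using map_of_zip_nth[of ps qs m] lq dp that by (simp add: f_def)
  have fo: "f x = x" if "x \<notin> set ps" for x
  proof -
    have "map_of (zip ps qs) x = None" using that lq
      by (simp add: map_of_eq_None_iff map_fst_zip[symmetric] del: map_fst_zip) (metis map_fst_zip set_map that)
    then show ?thesis by (simp add: f_def)
  qed
  have mf: "map f ps = qs" using fn lq by (intro nth_equalityI) auto
  have inj: "inj f"
  proof (rule injI)
    fix x y assume e: "f x = f y"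
    show "x = y"
    proof (cases "x \<in> set ps"; cases "y \<in> set ps")
      assume "x \<in> set ps" "y \<in> set ps"
      then obtain a b where ab: "a < length ps" "b < length ps" "x = ps ! a" "y = ps ! b"
        by (metis in_set_conv_nth)
      then have "qs ! a = qs ! b" using e fn by simp
      then have "a = b" using sq(2) ab lq by (simp add: nth_eq_iff_index_eq)
      then show ?thesis using ab by simp
    next
      assume "x \<in> set ps" "y \<notin> set ps"
      then obtain a where ab: "a < length ps" "x = ps ! a" by (metis in_set_conv_nth)
      then have "f x \<in> set ps" using fn lq sq by (metis nth_mem)
      then show ?thesis using e fo \<open>y \<notin> set ps\<close> by simp
    next
      assume "x \<notin> set ps" "y \<in> set ps"
      then obtain a where ab: "a < length ps" "y = ps ! a" by (metis in_set_conv_nth)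
      then have "f y \<in> set ps" using fn lq sq by (metis nth_mem)
      then show ?thesis using e fo \<open>x \<notin> set ps\<close> by simp
    next
      assume "x \<notin> set ps" "y \<notin> set ps" then show ?thesis using e fo by simp
    qed
  qed
  have "Aev qs = {\<omega>. (\<lambda>x. \<omega> (f x)) \<in> Aev ps}"
    unfolding Aev_def mf[symmetric] by (simp add: sorted_wrt_map)
  then show ?thesis using reindex_U[OF inj Aev_sets] by simp
qed

lemma prob_A_le:
  assumes dp: "distinct ps"
  shows "measure Umeasure (Aev ps) \<le> 1 / fact (length ps)"
proof -
  interpret prob_space Umeasure by (rule prob_U)
  define P where "P = permutations_of_set (set ps)"
  have fin: "finite P" unfolding P_def by simp
  have cP: "card P = fact (length ps)" unfolding P_def using dp by (simp add: distinct_card)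
  have disj: "disjoint_family_on Aev P"
    unfolding disjoint_family_on_def
  proof (intro ballI impI)
    fix xs ys assume "xs \<in> P" "ys \<in> P" "xs \<noteq> ys"
    then have "set xs = set ys" unfolding P_def by (auto simp: permutations_of_set_def)
    then show "Aev xs \<inter> Aev ys = {}"
      using sorted_key_unique[of _ xs ys] \<open>xs \<noteq> ys\<close> unfolding Aev_def by blast
  qed
  have "measure Umeasure (\<Union>qs\<in>P. Aev qs) = (\<Sum>qs\<in>P. measure Umeasure (Aev qs))"
    by (rule measure_finite_Union[OF fin _ disj]) (auto simp: Aev_sets)
  also have "\<dots> = (\<Sum>qs\<in>P. measure Umeasure (Aev ps))"
    using prob_A_perm[OF dp] unfolding P_def by simp
  also have "\<dots> = fact (length ps) * measure Umeasure (Aev ps)" using cP by simp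
  finally have "fact (length ps) * measure Umeasure (Aev ps) \<le> 1"
    using prob_le_1 by metis
  then show ?thesis by (simp add: field_simps)
qed



definition Lk :: "(nat\<times>nat) set \<Rightarrow> nat \<Rightarrow> (nat\<times>nat) list set" where
  "Lk B k = {ps. set ps \<subseteq> B \<and> length ps = k \<and> sorted_wrt (\<lambda>p q. fst p < fst q) ps}"

lemma fst_sorted_distinct: "sorted_wrt (\<lambda>p q. fst p < fst q) (ps :: (nat\<times>nat) list) \<Longrightarrow> distinct ps"
proof -
  assume "sorted_wrt (\<lambda>p q. fst p < fst q) ps"
  then have "sorted_wrt (<) (map fst ps)" by (simp add: sorted_wrt_map)
  then have "distinct (map fst ps)" using strict_sorted_iff by blast
  then show ?thesis by (simp add: distinct_map)
qed

lemma okc_split: "okc \<omega> ps \<longleftrightarrow> sorted_wrt (\<lambda>p q. fst p < fst q) ps \<and> \<omega> \<in> Aev ps"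
  unfolding okc_def Aev_def by (induction ps) auto

lemma finite_Lk: "finite B \<Longrightarrow> finite (Lk B k)"
  by (rule finite_subset[OF _ finite_lists_length_eq[of B k]]) (auto simp: Lk_def)

lemma LS_count:
  assumes B: "finite B" and k: "k \<ge> 1"
  shows "LS B \<omega> \<le> (k - 1) + card {ps \<in> Lk B k. \<omega> \<in> Aev ps}"
proof -
  obtain ps where ps: "set ps \<subseteq> B" "okc \<omega> ps" "LS B \<omega> = length ps" using LS_ex B by blast
  show ?thesis
  proof (cases "length ps < k")
    case True then show ?thesis using ps by simp
  next
    case False
    define L where "L = length ps"
    define g where "g m = take k (drop m ps)" for m
    have dps: "distinct ps" using okc_distinct[OF ps(2)] .
    have s1: "sorted_wrt (\<lambda>p q. fst p < fst q) ps" and s2: "\<omega> \<in> Aev ps"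
      using ps(2) okc_split by auto
    have sub: "g ` {0..L-k} \<subseteq> {ps \<in> Lk B k. \<omega> \<in> Aev ps}"
    proof
      fix x assume "x \<in> g ` {0..L-k}"
      then obtain m where m: "m \<le> L - k" "x = g m" by auto
      have "set x \<subseteq> B" using m ps(1) set_take_subset set_drop_subset unfolding g_def
        by (metis subset_trans)
      moreover have "length x = k" using m False unfolding g_def L_def by auto
      moreover have "sorted_wrt (\<lambda>p q. fst p < fst q) x" using s1 m unfolding g_def
        by (simp add: sorted_wrt_take sorted_wrt_drop)
      moreover have "\<omega> \<in> Aev x" using s2 m unfolding g_def Aev_def
        by (simp add: sorted_wrt_take sorted_wrt_drop)
      ultimately show "x \<in> {ps \<in> Lk B k. \<omega> \<in> Aev ps}" by (simp add: Lk_def)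
    qed
    have inj: "inj_on g {0..L-k}"
    proof (rule inj_onI)
      fix a b assume ab: "a \<in> {0..L-k}" "b \<in> {0..L-k}" "g a = g b"
      have hdg: "hd (g m) = ps ! m" if "m \<le> L - k" for m
      proof -
        have "m < length ps" using that k False unfolding L_def by linarith
        then show ?thesis using k unfolding g_def by (simp add: hd_take hd_drop_conv_nth)
      qed
      have "a \<le> L - k" "b \<le> L - k" using ab(1,2) by auto
      then have "ps ! a = ps ! b" using hdg[of a] hdg[of b] ab(3) by simp
      moreover have "a < length ps" "b < length ps" using ab k False unfolding L_def by auto
      ultimately show "a = b" using dps by (simp add: nth_eq_iff_index_eq)
    qed
    have "L - k + 1 = card (g ` {0..L-k})" using inj by (simp add: card_image)
    also have "\<dots> \<le> card {ps \<in> Lk B k. \<omega> \<in> Aev ps}"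
      by (rule card_mono[OF _ sub]) (use finite_Lk[OF B] in auto)
    finally show ?thesis using ps(3) False unfolding L_def by linarith
  qed
qed

lemma card_Lk: assumes B: "finite B" shows "card (Lk B k) \<le> card B choose k"
proof -
  have "inj_on set (Lk B k)"
    by (rule inj_onI) (auto simp: Lk_def intro: sorted_key_unique)
  moreover have "set ` Lk B k \<subseteq> {C. C \<subseteq> B \<and> card C = k}"
    by (auto simp: Lk_def distinct_card fst_sorted_distinct)
  ultimately have "card (Lk B k) \<le> card {C. C \<subseteq> B \<and> card C = k}"
    by (intro card_inj_on_le) (auto simp: B)
  then show ?thesis using n_subsets[OF B] by simp
qed

lemma choose_fact_le: "(d choose k) * fact k \<le> (d::nat) ^ k"
proof (cases "k \<le> d")
  case True
  have "fact k * fact (d - k) * (d choose k) = fact d" by (rule binomial_fact_lemma[OF True])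
  then have "(d choose k) * fact k = fact d div fact (d - k)"
    by (metis fact_nonzero mult.commute nonzero_mult_div_cancel_left mult.assoc)
  then show ?thesis using fact_div_fact_le_pow[OF True] by simp
next
  case False then show ?thesis by (simp add: binomial_eq_0)
qed

lemma okc_pred[measurable]: "Measurable.pred Umeasure (\<lambda>\<omega>. okc \<omega> ps)"
  unfolding okc_def by (rule meas_sorted)

lemma LS_real: assumes "finite A"
  shows "real (LS A \<omega>) = Max ((\<lambda>ps. real (if okc \<omega> ps then length ps else 0)) ` {ps. set ps \<subseteq> A \<and> distinct ps})"
proof -
  have fin: "finite {ps. set ps \<subseteq> A \<and> distinct ps}" using finite_subset_distinct[OF assms] .
  have ne: "{ps. set ps \<subseteq> A \<and> distinct ps} \<noteq> {}" by (auto intro!: exI[of _ "[]"])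
  have "real (LS A \<omega>) = Max (real ` (\<lambda>ps. if okc \<omega> ps then length ps else 0) ` {ps. set ps \<subseteq> A \<and> distinct ps})"
    unfolding LS_def by (rule mono_Max_commute) (use fin ne in \<open>auto simp: mono_def\<close>)
  then show ?thesis by (simp only: image_image)
qed

lemma LS_meas: assumes "finite A" shows "(\<lambda>\<omega>. real (LS A \<omega>)) \<in> borel_measurable Umeasure"
proof -
  have fin: "finite {ps. set ps \<subseteq> A \<and> distinct ps}" using finite_subset_distinct[OF assms] .
  show ?thesis unfolding LS_real[OF assms]
    by (rule borel_measurable_Max[OF fin]) measurable
qed

lemma LS_le_card: assumes "finite A" shows "LS A \<omega> \<le> card A"
proof -
  obtain ps where ps: "set ps \<subseteq> A" "okc \<omega> ps" "LS A \<omega> = length ps" using LS_ex assms by blast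
  have "length ps = card (set ps)" using okc_distinct[OF ps(2)] by (simp add: distinct_card)
  also have "\<dots> \<le> card A" by (rule card_mono[OF assms ps(1)])
  finally show ?thesis using ps(3) by simp
qed

lemma LS_int: assumes "finite A" shows "integrable Umeasure (\<lambda>\<omega>. real (LS A \<omega>))"
proof -
  interpret prob_space Umeasure by (rule prob_U)
  show ?thesis
    by (rule integrable_const_bound[where B="real (card A)"]) (use LS_le_card[OF assms] LS_meas[OF assms] in auto)
qed

lemma pow_fact_exp: "(x::real) \<ge> 0 \<Longrightarrow> x ^ n / fact n \<le> exp x"
proof -
  assume x: "x \<ge> 0"
  have s: "(\<lambda>n. x^n / fact n) sums exp x" using exp_converges[of x] by (simp add: divide_inverse_commute scaleR_conv_of_real)
  have "(\<Sum>m\<in>{n}. x^m / fact m) \<le> (\<Sum>m. x^m / fact m)"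
    by (rule sum_le_suminf) (use s x in \<open>auto simp: sums_iff\<close>)
  then show ?thesis using s by (simp add: sums_iff)
qed



lemma exp2_le: "exp (2::real) \<le> 9"
proof -
  have "exp (2::real) = exp 1 ^ 2" by (simp add: exp_of_nat_mult[symmetric])
  also have "\<dots> \<le> 3 ^ 2" by (rule power_mono[OF exp_le]) auto
  finally show ?thesis by simp
qed

lemma dk_le: assumes d: "real d \<le> (real k)^2 / 9" shows "real d ^ k \<le> (fact k)^2"
proof -
  have e: "real k ^ k \<le> exp (real k) * fact k"
    using pow_fact_exp[of "real k" k] by (simp add: field_simps)
  have "real d \<le> (real k)^2 / exp 2"
  proof -
    have "(real k)^2 / 9 \<le> (real k)^2 / exp 2"
      by (rule divide_left_mono[OF exp2_le]) auto
    then show ?thesis using d by linarith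
  qed
  then have "real d ^ k \<le> ((real k)^2 / exp 2) ^ k" by (rule power_mono) simp
  also have "\<dots> = (real k ^ k)^2 / (exp (real k))^2"
    by (simp add: power_divide power_mult[symmetric] mult.commute exp_of_nat_mult[symmetric]
        power_mult_distrib)
  also have "\<dots> \<le> (exp (real k) * fact k)^2 / (exp (real k))^2"
    by (rule divide_right_mono[OF power_mono[OF e]]) auto
  also have "\<dots> = (fact k)^2" by (simp add: power_mult_distrib)
  finally show ?thesis .
qed

lemma EL_bound: assumes B: "finite B"
  shows "(\<integral>\<omega>. real (LS B \<omega>) \<partial>Umeasure) \<le> 6 * sqrt (real (card B))"
proof -
  interpret prob_space Umeasure by (rule prob_U)
  show ?thesis
  proof (cases "card B = 0")
    case True
    have "LS B \<omega> = 0" for \<omega> using LS_le_card[OF B, of \<omega>] True by simp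
    then show ?thesis by simp
  next
    case False
    define d where "d = card B"
    define k where "k = nat \<lceil>3 * sqrt (real d)\<rceil>"
    have d1: "real d \<ge> 1" using False unfolding d_def by simp
    have sd: "sqrt (real d) \<ge> 1" using d1 by simp
    have kge: "3 * sqrt (real d) \<le> real k" unfolding k_def using sd by linarith
    have kle: "real k \<le> 3 * sqrt (real d) + 1" unfolding k_def using sd by linarith
    have k1: "k \<ge> 1" using kge sd by linarith
    have dk2: "real d \<le> (real k)^2 / 9"
    proof -
      have "(3 * sqrt (real d))^2 \<le> (real k)^2" by (rule power_mono[OF kge]) (use sd in auto)
      then show ?thesis using d1 by (simp add: power_mult_distrib)
    qed
    have fin: "finite (Lk B k)" by (rule finite_Lk[OF B])
    have pw: "real (LS B \<omega>) \<le> real (k - 1) + (\<Sum>ps\<in>Lk B k. indicator (Aev ps) \<omega>)" for \<omega>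
    proof -
      have "real (card {ps \<in> Lk B k. \<omega> \<in> Aev ps}) = (\<Sum>ps\<in>{ps \<in> Lk B k. \<omega> \<in> Aev ps}. 1)"
        by (rule real_of_card)
      also have "\<dots> = (\<Sum>ps\<in>Lk B k. if \<omega> \<in> Aev ps then 1 else 0)"
        by (rule sum.inter_filter[OF fin])
      also have "\<dots> = (\<Sum>ps\<in>Lk B k. indicator (Aev ps) \<omega>)"
        by (rule sum.cong) (auto simp: indicator_def)
      finally have "real (card {ps \<in> Lk B k. \<omega> \<in> Aev ps}) = (\<Sum>ps\<in>Lk B k. indicator (Aev ps) \<omega>)" .
      moreover have "real (LS B \<omega>) \<le> real (k - 1 + card {ps \<in> Lk B k. \<omega> \<in> Aev ps})"
        using LS_count[OF B k1, of \<omega>] by (simp only: of_nat_le_iff)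
      ultimately show ?thesis by simp
    qed
    have int2: "integrable Umeasure (\<lambda>\<omega>. real (k - 1) + (\<Sum>ps\<in>Lk B k. indicator (Aev ps) \<omega>))"
    proof -
      have i1: "integrable Umeasure (\<lambda>\<omega>. real (k - 1))" by simp
      have i2: "integrable Umeasure (\<lambda>\<omega>. \<Sum>ps\<in>Lk B k. indicator (Aev ps) \<omega> :: real)"
        by (rule Bochner_Integration.integrable_sum) (auto intro!: integrable_real_indicator Aev_sets simp: less_top[symmetric])
      show ?thesis using Bochner_Integration.integrable_add[OF i1 i2] by simp
    qed
    have "(\<integral>\<omega>. real (LS B \<omega>) \<partial>Umeasure) \<le> (\<integral>\<omega>. real (k - 1) + (\<Sum>ps\<in>Lk B k. indicator (Aev ps) \<omega>) \<partial>Umeasure)"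
      by (rule Bochner_Integration.integral_mono[OF LS_int[OF B] int2 pw])
    also have "\<dots> = real (k - 1) + (\<Sum>ps\<in>Lk B k. measure Umeasure (Aev ps))"
    proof -
      have i1: "integrable Umeasure (\<lambda>\<omega>. real (k - 1))" by simp
      have i2: "integrable Umeasure (\<lambda>\<omega>. \<Sum>ps\<in>Lk B k. indicator (Aev ps) \<omega> :: real)"
        by (rule Bochner_Integration.integrable_sum) (auto intro!: integrable_real_indicator Aev_sets simp: less_top[symmetric])
      have "(\<integral>\<omega>. real (k - 1) + (\<Sum>ps\<in>Lk B k. indicator (Aev ps) \<omega>) \<partial>Umeasure)
          = real (k - 1) + (\<integral>\<omega>. (\<Sum>ps\<in>Lk B k. indicator (Aev ps) \<omega>) \<partial>Umeasure)"
        using Bochner_Integration.integral_add[OF i1 i2] prob_space by simp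
      also have "(\<integral>\<omega>. (\<Sum>ps\<in>Lk B k. indicator (Aev ps) \<omega>) \<partial>Umeasure) = (\<Sum>ps\<in>Lk B k. (\<integral>\<omega>. indicator (Aev ps) \<omega> \<partial>Umeasure) :: real)"
        by (rule Bochner_Integration.integral_sum) (auto intro!: integrable_real_indicator Aev_sets simp: less_top[symmetric])
      also have "\<dots> = (\<Sum>ps\<in>Lk B k. measure Umeasure (Aev ps))" by simp
      finally show ?thesis .
    qed
    also have "\<dots> \<le> real (k - 1) + (\<Sum>ps\<in>Lk B k. 1 / fact k)"
    proof -
      have "measure Umeasure (Aev ps) \<le> 1 / fact k" if "ps \<in> Lk B k" for ps
        using prob_A_le[of ps] that fst_sorted_distinct[of ps] by (simp add: Lk_def)
      then have "(\<Sum>ps\<in>Lk B k. measure Umeasure (Aev ps)) \<le> (\<Sum>ps\<in>Lk B k. 1 / fact k)"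
        by (rule sum_mono)
      then show ?thesis by simp
    qed
    also have "(\<Sum>ps\<in>Lk B k. 1 / fact k) = real (card (Lk B k)) / fact k" by simp
    also have "\<dots> \<le> real (d choose k) / fact k"
      using card_Lk[OF B, of k] unfolding d_def by (simp add: divide_right_mono)
    also have "\<dots> \<le> 1"
    proof -
      have "real (d choose k) * fact k \<le> real d ^ k"
        using choose_fact_le[of d k] by (metis of_nat_fact of_nat_le_iff of_nat_mult of_nat_power)
      also have "\<dots> \<le> (fact k)^2" by (rule dk_le[OF dk2])
      finally have "real (d choose k) * fact k \<le> fact k * fact k" by (simp add: power2_eq_square)
      then have "real (d choose k) \<le> fact k" by (simp add: mult_le_cancel_right)
      then show ?thesis by simp
    qed
    finally have "(\<integral>\<omega>. real (LS B \<omega>) \<partial>Umeasure) \<le> real k" using k1 by simp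
    also have "\<dots> \<le> 6 * sqrt (real d)" using kle sd by linarith
    finally show ?thesis unfolding d_def .
  qed
qed



lemma finite_Iset: "finite (Iset n i)" unfolding Iset_def by auto

lemma Lchain_eq: "Lchain (Sset n i \<omega>) = LS (Iset n i) \<omega>"
proof -
  define I where "I = Iset n i"
  define pt where "pt p = (\<omega> p, real (fst p))" for p :: "nat \<times> nat"
  have SI: "Sset n i \<omega> = pt ` I" unfolding Sset_def I_def Iset_def pt_def by auto
  have finI: "finite I" unfolding I_def by (rule finite_Iset)
  define F where "F = {length xs | xs. set xs \<subseteq> Sset n i \<omega> \<and> sorted_wrt prec xs}"
  have inF: "length ps \<in> F" if "set ps \<subseteq> I" "okc \<omega> ps" for ps
  proof -
    have "set (map pt ps) \<subseteq> Sset n i \<omega>" using that SI by auto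
    moreover have "sorted_wrt prec (map pt ps)"
      using that(2) unfolding okc_def sorted_wrt_map
      by (rule sorted_wrt_mono_rel[rotated]) (auto simp: prec_def pt_def)
    ultimately show ?thesis unfolding F_def by (metis (mono_tags, lifting) length_map mem_Collect_eq)
  qed
  have leF: "y \<le> LS I \<omega>" if yF: "y \<in> F" for y
  proof -
    obtain xs where xs: "y = length xs" "set xs \<subseteq> Sset n i \<omega>" "sorted_wrt prec xs"
      using yF[unfolded F_def] by blast
    define g where "g = inv_into I pt"
    have g1: "pt (g x) = x" "g x \<in> I" if "x \<in> Sset n i \<omega>" for x
      using that SI unfolding g_def by (auto simp: f_inv_into_f inv_into_into)
    have "set (map g xs) \<subseteq> I" using xs g1 by auto
    moreover have "okc \<omega> (map g xs)"
      unfolding okc_def sorted_wrt_map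
    proof (rule sorted_wrt_mono_rel[rotated, OF xs(3)])
      fix x y assume xy: "x \<in> set xs" "y \<in> set xs" "prec x y"
      then have "x \<in> Sset n i \<omega>" "y \<in> Sset n i \<omega>" using xs(2) by auto
      then have "pt (g x) = x" "pt (g y) = y" using g1(1) by blast+
      then show "fst (g x) < fst (g y) \<and> \<omega> (g x) < \<omega> (g y)"
        using xy(3) unfolding prec_def pt_def by (metis fst_conv of_nat_less_iff snd_conv)
    qed
    ultimately show ?thesis using LS_ge[OF finI] xs(1) by fastforce
  qed
  obtain ps where ps: "set ps \<subseteq> I" "okc \<omega> ps" "LS I \<omega> = length ps" using LS_ex[OF finI] by blast
  have "Max F = LS I \<omega>"
  proof (rule Max_eqI)
    show "finite F" by (rule finite_subset[of F "{..LS I \<omega>}"]) (use leF in auto)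
  qed (use leF inF[OF ps(1,2)] ps(3) in auto)
  then show ?thesis unfolding Lchain_def F_def I_def .
qed

lemma eval_LS: "eval n i = (\<integral>\<omega>. real (LS (Iset n i) \<omega>) \<partial>Umeasure)"
  unfolding eval_def Lchain_eq ..

lemma card_Iset: "card (Iset n i) = (\<Sum>l=1..n. i l)"
  unfolding Iset_def by simp

lemma Iset_mono: "(\<And>l. x l \<le> m l) \<Longrightarrow> Iset n x \<subseteq> Iset n m"
  unfolding Iset_def by auto (meson order_trans)

lemma step:
  assumes le: "\<And>l. x l \<le> m l"
  shows "eval n x \<le> eval n m"
    and "eval n m \<le> eval n x + 6 * sqrt (\<Sum>l=1..n. real (m l) - real (x l))"
proof -
  have sub: "Iset n x \<subseteq> Iset n m" by (rule Iset_mono[OF le])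
  show "eval n x \<le> eval n m" unfolding eval_LS
    by (rule Bochner_Integration.integral_mono[OF LS_int[OF finite_Iset] LS_int[OF finite_Iset]])
       (use LS_mono[OF finite_Iset sub] in auto)
  define D where "D = Iset n m - Iset n x"
  have finD: "finite D" unfolding D_def using finite_Iset by auto
  have un: "Iset n m = Iset n x \<union> D" unfolding D_def using sub by auto
  have pw: "real (LS (Iset n m) \<omega>) \<le> real (LS (Iset n x) \<omega>) + real (LS D \<omega>)" for \<omega>
    using LS_union[OF finite_Iset finD, of n x \<omega>] un by simp
  have "eval n m \<le> (\<integral>\<omega>. real (LS (Iset n x) \<omega>) + real (LS D \<omega>) \<partial>Umeasure)"
    unfolding eval_LS
    by (rule Bochner_Integration.integral_mono[OF LS_int[OF finite_Iset]
         Bochner_Integration.integrable_add[OF LS_int[OF finite_Iset] LS_int[OF finD]] pw])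
  also have "\<dots> = eval n x + (\<integral>\<omega>. real (LS D \<omega>) \<partial>Umeasure)"
    unfolding eval_LS by (rule Bochner_Integration.integral_add[OF LS_int[OF finite_Iset] LS_int[OF finD]])
  also have "(\<integral>\<omega>. real (LS D \<omega>) \<partial>Umeasure) \<le> 6 * sqrt (real (card D))" by (rule EL_bound[OF finD])
  also have "real (card D) = (\<Sum>l=1..n. real (m l) - real (x l))"
  proof -
    have "card D = card (Iset n m) - card (Iset n x)"
      unfolding D_def by (rule card_Diff_subset[OF finite_Iset sub])
    moreover have "card (Iset n x) \<le> card (Iset n m)" by (rule card_mono[OF finite_Iset sub])
    ultimately have "real (card D) = real (card (Iset n m)) - real (card (Iset n x))" by simp
    then show ?thesis by (simp add: card_Iset sum_subtractf)
  qed
  finally show "eval n m \<le> eval n x + 6 * sqrt (\<Sum>l=1..n. real (m l) - real (x l))" by simp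
qed

theorem mainTheorem9:
  fixes n :: nat and i j :: "nat \<Rightarrow> nat"
  shows "\<bar>eval n i - eval n j\<bar>
           \<le> 6 * sqrt (\<Sum>l = 1..n. \<bar>real (i l) - real (j l)\<bar>)"
proof -
  define m where "m l = max (i l) (j l)" for l
  define S where "S = (\<Sum>l = 1..n. \<bar>real (i l) - real (j l)\<bar>)"
  have li: "\<And>l. i l \<le> m l" and lj: "\<And>l. j l \<le> m l" unfolding m_def by auto
  have si: "sqrt (\<Sum>l=1..n. real (m l) - real (i l)) \<le> sqrt S"
    unfolding S_def by (rule real_sqrt_le_mono, rule sum_mono) (auto simp: m_def)
  have sj: "sqrt (\<Sum>l=1..n. real (m l) - real (j l)) \<le> sqrt S"
    unfolding S_def by (rule real_sqrt_le_mono, rule sum_mono) (auto simp: m_def)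
  have "eval n i \<le> eval n j + 6 * sqrt S"
    using step(1)[of i m n, OF li] step(2)[of j m n, OF lj] sj by linarith
  moreover have "eval n j \<le> eval n i + 6 * sqrt S"
    using step(1)[of j m n, OF lj] step(2)[of i m n, OF li] si by linarith
  ultimately show ?thesis unfolding S_def by linarith
qed


end
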